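(* Consider the delay differential system \[ \begin{aligned} \dot T(t)&= s-dT(t)+aT(t)\Big(1-\frac{T(t)+I(t)}{T_{\max}}\Big)-\frac{bT(t)V(t)}{1+\alpha V(t)},\\ \dot I(t)&= \frac{bT(t-\tau)V(t-\tau)}{1+\alpha V(t-\tau)}+aI(t)\Big(1-\frac{T(t)+I(t)}{T_{\max}}\Big)-\mu I(t),\\ \dot V(t)&= pI(t)-cV(t), \end{aligned} \] with positive constants $s,d,a,T_{\max},b,\alpha,\mu,p,c$ and $\tau\ge0$. Let \[ T_0=\frac{T_{\max}}{2a}\Big(a-d+\sqrt{(a-d)^2+\tfrac{4as}{T_{\max}}}\Big),\qquad R_0=\frac{1}{\mu}\Big[\frac{bpT_0}{c}+a\Big(1-\frac{T_0}{T_{\max}}\Big)\Big]. \] Assume $d=\mu$ and $R_0>1$. Then the infected equilibrium $E_2=(T_2,I_2,V_2)$ (the unique equilibrium with all components positive) is globally asymptotically stable (with respect to solutions with positive initial data) for any $\tau\ge0$. *)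

theory Defs
  imports "HOL-Analysis.Analysis"
begin

definition incid :: "real \<Rightarrow> real \<Rightarrow> real \<Rightarrow> real \<Rightarrow> real" where
  "incid b al x v = b * x * v / (1 + al * v)"

definition T0 :: "real \<Rightarrow> real \<Rightarrow> real \<Rightarrow> real \<Rightarrow> real" where
  "T0 s d a Tm = Tm / (2 * a) * (a - d + sqrt ((a - d)^2 + 4 * a * s / Tm))"

definition R0 :: "real \<Rightarrow> real \<Rightarrow> real \<Rightarrow> real \<Rightarrow> real \<Rightarrow> real \<Rightarrow> real \<Rightarrow> real \<Rightarrow> real" where
  "R0 s d a Tm b mu p c =
     (1 / mu) * (b * p * T0 s d a Tm / c + a * (1 - T0 s d a Tm / Tm))"

definition is_solution ::
  "real \<Rightarrow> real \<Rightarrow> real \<Rightarrow> real \<Rightarrow> real \<Rightarrow> real \<Rightarrow> real \<Rightarrow> real \<Rightarrow> real \<Rightarrow> real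
   \<Rightarrow> (real \<Rightarrow> real) \<Rightarrow> (real \<Rightarrow> real) \<Rightarrow> (real \<Rightarrow> real) \<Rightarrow> bool" where
  "is_solution s d a Tm b al mu p c tau T I V \<longleftrightarrow>
     continuous_on {-tau..} T \<and> continuous_on {-tau..} I \<and> continuous_on {-tau..} V \<and>
     (\<forall>t\<ge>0.
        (T has_real_derivative
           (s - d * T t + a * T t * (1 - (T t + I t) / Tm) - incid b al (T t) (V t)))
          (at t within {0..}) \<and>
        (I has_real_derivative
           (incid b al (T (t - tau)) (V (t - tau)) + a * I t * (1 - (T t + I t) / Tm) - mu * I t))
          (at t within {0..}) \<and>
        (V has_real_derivative (p * I t - c * V t)) (at t within {0..}))"

definition pos_init :: "real \<Rightarrow> (real \<Rightarrow> real) \<Rightarrow> (real \<Rightarrow> real) \<Rightarrow> (real \<Rightarrow> real) \<Rightarrow> bool" where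
  "pos_init tau T I V \<longleftrightarrow> (\<forall>\<theta>\<in>{-tau..0}. T \<theta> > 0 \<and> I \<theta> > 0 \<and> V \<theta> > 0)"

definition pos_equilibrium ::
  "real \<Rightarrow> real \<Rightarrow> real \<Rightarrow> real \<Rightarrow> real \<Rightarrow> real \<Rightarrow> real \<Rightarrow> real \<Rightarrow> real
   \<Rightarrow> real \<times> real \<times> real \<Rightarrow> bool" where
  "pos_equilibrium s d a Tm b al mu p c E \<longleftrightarrow>
     (case E of (T2, I2, V2) \<Rightarrow>
        T2 > 0 \<and> I2 > 0 \<and> V2 > 0 \<and>
        s - d * T2 + a * T2 * (1 - (T2 + I2) / Tm) - incid b al T2 V2 = 0 \<and>
        incid b al T2 V2 + a * I2 * (1 - (T2 + I2) / Tm) - mu * I2 = 0 \<and>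
        p * I2 - c * V2 = 0)"

definition globally_asymp_stable ::
  "real \<Rightarrow> real \<Rightarrow> real \<Rightarrow> real \<Rightarrow> real \<Rightarrow> real \<Rightarrow> real \<Rightarrow> real \<Rightarrow> real \<Rightarrow> real
   \<Rightarrow> real \<times> real \<times> real \<Rightarrow> bool" where
  "globally_asymp_stable s d a Tm b al mu p c tau E \<longleftrightarrow>
     (case E of (T2, I2, V2) \<Rightarrow>
       (\<forall>\<epsilon>>0. \<exists>\<delta>>0. \<forall>T I V.
          is_solution s d a Tm b al mu p c tau T I V \<and> pos_init tau T I V \<and>
          (\<forall>\<theta>\<in>{-tau..0}. \<bar>T \<theta> - T2\<bar> < \<delta> \<and> \<bar>I \<theta> - I2\<bar> < \<delta> \<and> \<bar>V \<theta> - V2\<bar> < \<delta>)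
          \<longrightarrow> (\<forall>t\<ge>0. \<bar>T t - T2\<bar> < \<epsilon> \<and> \<bar>I t - I2\<bar> < \<epsilon> \<and> \<bar>V t - V2\<bar> < \<epsilon>)) \<and>
       (\<forall>T I V.
          is_solution s d a Tm b al mu p c tau T I V \<and> pos_init tau T I V
          \<longrightarrow> (T \<longlongrightarrow> T2) at_top \<and> (I \<longlongrightarrow> I2) at_top \<and> (V \<longlongrightarrow> V2) at_top))"

end

theory Submission
  imports Defs
begin


definition gg :: "real \<Rightarrow> real" where "gg y = y - 1 - ln y"

lemma incid_pos: "b > 0 \<Longrightarrow> al > 0 \<Longrightarrow> x > 0 \<Longrightarrow> v > 0 \<Longrightarrow> incid b al x v > 0"
  unfolding incid_def by (simp add: add_pos_pos)

lemma pf_aux: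
  fixes V Vs al u w :: real
  assumes uw: "u = 1 + al*V" "w = 1 + al*Vs" and nz: "V \<noteq> 0" "Vs \<noteq> 0" "u \<noteq> 0" "w \<noteq> 0"
  shows "(V/Vs)*(w/u) - V/Vs + u/w - 1 = -al*(V-Vs)^2/(Vs*w*u)"
proof -
  have "(V/Vs)*(w/u) - V/Vs + u/w - 1 = (V*w*w - V*u*w + u*u*Vs - Vs*w*u)/(Vs*w*u)"
    using nz by (simp add: field_simps)
  also have "V*w*w - V*u*w + u*u*Vs - Vs*w*u = -al*(V-Vs)^2"
    unfolding uw by (simp add: algebra_simps power2_eq_square)
  finally show ?thesis by simp
qed

lemma key_alg:
  fixes T I V Td Vd Ts Is Vs a Tm b al p c s d :: real
  assumes pos: "T > 0" "I > 0" "V > 0" "Td > 0" "Vd > 0" "Ts > 0" "Is > 0" "Vs > 0"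
    "a > 0" "Tm > 0" "b > 0" "al > 0" "p > 0" "c > 0"
  and eq1: "s - d*Ts + a*Ts*(1-(Ts+Is)/Tm) - incid b al Ts Vs = 0"
  and eq2: "incid b al Ts Vs + a*Is*(1-(Ts+Is)/Tm) - d*Is = 0"
  and eq3: "p*Is - c*Vs = 0"
  shows "(1-Ts/T)*(s - d*T + a*T*(1-(T+I)/Tm) - incid b al T V)
       + (1-Is/I)*(incid b al Td Vd + a*I*(1-(T+I)/Tm) - d*I)
       + (incid b al Ts Vs/(p*Is))*(1-Vs/V)*(p*I - c*V)
       + incid b al Ts Vs*(gg(incid b al T V/incid b al Ts Vs) - gg(incid b al Td Vd/incid b al Ts Vs))
     \<le> -(s/(Ts+Is))*(T-Ts)^2/T - a*((T+I)-(Ts+Is))^2/Tm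
        - incid b al Ts Vs*al*(V-Vs)^2/(Vs*(1+al*Vs)*(1+al*V))"
proof -
  define fs where "fs = incid b al Ts Vs"
  define ph where "ph = incid b al T V"
  define pd where "pd = incid b al Td Vd"
  define u where "u = 1+al*V"
  define w where "w = 1+al*Vs"
  define N where "N = T+I"
  define Ns where "Ns = Ts+Is"
  have fs: "fs = b*Ts*Vs/w" unfolding fs_def incid_def w_def by simp
  have ph: "ph = b*T*V/u" unfolding ph_def incid_def u_def by simp
  have fsp: "fs > 0" using pos unfolding fs_def by (simp add: incid_pos)
  have php: "ph > 0" using pos unfolding ph_def by (simp add: incid_pos)
  have pdp: "pd > 0" using pos unfolding pd_def by (simp add: incid_pos)
  have q1: "u > 0" "w > 0" using pos by (simp_all add: add_pos_pos u_def w_def)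
  have Nsp: "Ns > 0" using pos by (simp add: Ns_def)
  define A where "A = pd*Is/(fs*I)"
  define B where "B = I*Vs/(Is*V)"
  define Q where "Q = u/w"
  define R where "R = Ts/T"
  have Ap: "A > 0" "B > 0" "Q > 0" "R > 0" using pos fsp pdp q1 by (auto simp: A_def B_def Q_def R_def)
  have fs2: "fs*w = b*Ts*Vs" using q1 unfolding fs by simp
  have phR: "ph*R = fs*(V/Vs)*(w/u)"
  proof -
    have "fs*(V/Vs)*(w/u) = (fs*w)*V/(Vs*u)" by (simp add: field_simps)
    also have "\<dots> = Vs*(b*Ts*V)/(Vs*u)" unfolding fs2 by (simp add: mult_ac)
    also have "\<dots> = b*Ts*V/u" using pos by (intro nonzero_mult_divide_mult_cancel_left) simp
    also have "\<dots> = ph*R" unfolding ph R_def using pos by (simp add: field_simps)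
    finally show ?thesis by simp
  qed
  have "A*B*R*Q = pd*R/(fs*(V/Vs)*(w/u))"
    using pos fsp q1 unfolding A_def B_def Q_def R_def by (simp add: field_simps)
  also have "\<dots> = pd/ph" unfolding phR[symmetric] using Ap php by simp
  also have "\<dots> = (pd/fs)/(ph/fs)" using fsp by simp
  finally have prod: "A*B*R*Q = (pd/fs)/(ph/fs)" .
  have lnid: "ln (pd/fs) - ln (ph/fs) = ln A + ln B + ln R + ln Q"
  proof -
    have "ln (pd/fs) - ln (ph/fs) = ln ((pd/fs)/(ph/fs))" using fsp php pdp by (simp add: ln_div)
    also have "\<dots> = ln (A*B*R*Q)" using prod by simp
    also have "\<dots> = ln A + ln B + ln R + ln Q" using Ap by (simp add: ln_mult)
    finally show ?thesis .
  qed
  have le: "ln A + ln B + ln R + ln Q \<le> A + B + R + Q - 4"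
    using ln_le_minus_one[OF Ap(1)] ln_le_minus_one[OF Ap(2)] ln_le_minus_one[OF Ap(3)] ln_le_minus_one[OF Ap(4)] by linarith
  have dd: "d = fs/Is + a*(1-Ns/Tm)" using eq2 pos unfolding fs_def Ns_def by (simp add: field_simps)
  have ss: "s = d*Ts - a*Ts*(1-Ns/Tm) + fs" using eq1 unfolding fs_def Ns_def by simp
  have cc: "c = p*Is/Vs" using eq3 pos by (simp add: field_simps)
  have d1: "d - a*(1-Ns/Tm) = s/Ns" using eq1 eq2 Nsp pos unfolding fs_def Ns_def by (simp add: field_simps)
  have pa: "(1-Ts/T)*(s - d*T + a*T*(1-N/Tm) - ph) = -(d - a*(1-Ns/Tm))*(T-Ts)^2/T - a*(T-Ts)*(N-Ns)/Tm + fs - ph - fs*R + ph*R"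
    unfolding ss R_def using pos by (simp add: field_simps power2_eq_square)
  have pb: "(1-Is/I)*(pd + a*I*(1-N/Tm) - d*I) = pd - fs*A - a*(I-Is)*(N-Ns)/Tm - fs*I/Is + fs"
    unfolding dd A_def using pos fsp by (simp add: field_simps)
  have pc: "(fs/(p*Is))*(1-Vs/V)*(p*I - c*V) = fs*(I/Is - V/Vs - B + 1)"
    unfolding cc B_def using pos by (simp add: field_simps)
  have pf: "(V/Vs)*(w/u) - V/Vs + Q - 1 = -al*(V-Vs)^2/(Vs*w*u)"
    unfolding Q_def using pf_aux[OF u_def w_def] pos q1 by simp
  have pg: "fs*(gg(ph/fs) - gg(pd/fs)) = ph - pd + fs*(ln (pd/fs) - ln (ph/fs))"
    unfolding gg_def using fsp by (simp add: algebra_simps)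
  have NN: "N - Ns = (T-Ts) + (I-Is)" unfolding N_def Ns_def by simp
  have "(1-Ts/T)*(s - d*T + a*T*(1-N/Tm) - ph) + (1-Is/I)*(pd + a*I*(1-N/Tm) - d*I)
       + (fs/(p*Is))*(1-Vs/V)*(p*I - c*V) + fs*(gg(ph/fs) - gg(pd/fs))
     \<le> -(s/Ns)*(T-Ts)^2/T - a*(N-Ns)^2/Tm - fs*al*(V-Vs)^2/(Vs*w*u)"
  proof -
    have e1: "a*(T-Ts)*(N-Ns)/Tm + a*(I-Is)*(N-Ns)/Tm = a*(N-Ns)^2/Tm"
    proof -
      have "a*(T-Ts)*(N-Ns)/Tm + a*(I-Is)*(N-Ns)/Tm = (a*(T-Ts)*(N-Ns) + a*(I-Is)*(N-Ns))/Tm"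
        by (simp add: add_divide_distrib)
      also have "a*(T-Ts)*(N-Ns) + a*(I-Is)*(N-Ns) = a*(N-Ns)^2" unfolding NN by (simp add: algebra_simps power2_eq_square)
      finally show ?thesis .
    qed
    have e2: "fs*((V/Vs)*(w/u) - V/Vs + Q - 1) = - fs*al*(V-Vs)^2/(Vs*w*u)" unfolding pf by simp
    have e3: "fs*(ln (pd/fs) - ln (ph/fs)) \<le> fs*(A + B + R + Q - 4)"
      unfolding lnid using le fsp by (simp add: mult_left_mono)
    show ?thesis unfolding pa pb pc pg d1 phR using e1 e2 e3
      by (simp add: algebra_simps)
  qed
  then show ?thesis unfolding fs_def ph_def pd_def u_def w_def N_def Ns_def by simp
qed


lemma cont_bound: "continuous_on {a..b::real} (f::real\<Rightarrow>real) \<Longrightarrow> \<exists>M. \<forall>x\<in>{a..b}. \<bar>f x\<bar> \<le> M"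
proof -
  assume "continuous_on {a..b::real} f"
  then have "bounded (f ` {a..b})" by (intro compact_imp_bounded compact_continuous_image) auto
  then show ?thesis by (auto simp: bounded_real)
qed

lemma at0: "t > 0 \<Longrightarrow> at t within {0::real..} = at t"
  by (rule at_within_interior) (simp add: interior_real_atLeast)

lemma exp_growth:
  fixes X X' :: "real \<Rightarrow> real"
  assumes "0 \<le> t1" "continuous_on {0..t1} X" "X 0 > 0"
    and "\<And>t. 0 < t \<Longrightarrow> t < t1 \<Longrightarrow> (X has_real_derivative X' t) (at t)"
    and "\<And>t. 0 < t \<Longrightarrow> t < t1 \<Longrightarrow> X' t \<ge> - K * X t"
  shows "X t1 > 0"
proof -
  define Y where "Y t = X t * exp (K*t)" for t
  have "Y 0 \<le> Y t1"
  proof (rule DERIV_nonneg_imp_increasing_open[OF assms(1)])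
    fix t assume t: "0 < t" "t < t1"
    have "(Y has_real_derivative (X' t * exp (K*t) + X t * (exp (K*t) * K))) (at t)"
      unfolding Y_def using assms(4)[OF t]
      by (auto intro!: derivative_eq_intros)
    moreover have "X' t * exp (K*t) + X t * (exp (K*t) * K) \<ge> 0"
    proof -
      have "X' t * exp (K*t) + X t * (exp (K*t) * K) = (X' t + K * X t) * exp (K*t)" by (simp add: algebra_simps)
      also have "\<dots> \<ge> 0" using assms(5)[OF t] by (intro mult_nonneg_nonneg) auto
      finally show ?thesis .
    qed
    ultimately show "\<exists>y. (Y has_real_derivative y) (at t) \<and> 0 \<le> y" by blast
  next
    show "continuous_on {0..t1} Y" unfolding Y_def using assms(2) by (intro continuous_intros) auto
  qed
  then have "X 0 \<le> X t1 * exp (K*t1)" by (simp add: Y_def)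
  then have "X t1 * exp (K*t1) > 0" using assms(3) by linarith
  then show ?thesis by (simp add: zero_less_mult_iff)
qed

locale dde =
  fixes s d a Tm b al mu p c tau :: real and T I V :: "real \<Rightarrow> real" and Ts Is Vs :: real
  assumes params: "s > 0" "d > 0" "a > 0" "Tm > 0" "b > 0" "al > 0" "mu > 0" "p > 0" "c > 0" "tau \<ge> 0"
    and dmu: "d = mu"
    and sol: "is_solution s d a Tm b al mu p c tau T I V"
    and init: "pos_init tau T I V"
begin

definition "fT t = s - d * T t + a * T t * (1 - (T t + I t) / Tm) - incid b al (T t) (V t)"
definition "fI t = incid b al (T (t - tau)) (V (t - tau)) + a * I t * (1 - (T t + I t) / Tm) - mu * I t"
definition "fV t = p * I t - c * V t"

lemma contT: "continuous_on {-tau..} T" and contI: "continuous_on {-tau..} I" and contV: "continuous_on {-tau..} V"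
  using sol unfolding is_solution_def by auto

lemma derT: "t \<ge> 0 \<Longrightarrow> (T has_real_derivative fT t) (at t within {0..})"
  and derI: "t \<ge> 0 \<Longrightarrow> (I has_real_derivative fI t) (at t within {0..})"
  and derV: "t \<ge> 0 \<Longrightarrow> (V has_real_derivative fV t) (at t within {0..})"
  using sol unfolding is_solution_def fT_def fI_def fV_def by auto

lemma incid_le: "x \<ge> 0 \<Longrightarrow> v \<ge> 0 \<Longrightarrow> incid b al x v \<le> b * x * v"
proof -
  assume xv: "x \<ge> 0" "v \<ge> 0"
  have h1: "1 \<le> 1 + al * v" using xv params by simp
  have h2: "0 \<le> b * x * v" using xv params by simp
  have "b * x * v / (1 + al * v) \<le> b * x * v / 1"
    by (rule divide_left_mono[OF h1 h2]) (use h1 in simp)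
  then show ?thesis unfolding incid_def by simp
qed

lemma incid_nonneg: "x \<ge> 0 \<Longrightarrow> v \<ge> 0 \<Longrightarrow> incid b al x v \<ge> 0"
  using params unfolding incid_def by (simp add: add_nonneg_nonneg)

lemma positive: "t \<ge> -tau \<Longrightarrow> T t > 0 \<and> I t > 0 \<and> V t > 0"
proof (rule ccontr)
  assume t: "t \<ge> -tau" and neg: "\<not> (T t > 0 \<and> I t > 0 \<and> V t > 0)"
  have init': "\<theta> \<in> {-tau..0} \<Longrightarrow> T \<theta> > 0 \<and> I \<theta> > 0 \<and> V \<theta> > 0" for \<theta>
    using init unfolding pos_init_def by auto
  define Z where "Z = {0..} \<inter> (\<lambda>u. min (T u) (min (I u) (V u))) -` {..0}"
  have t0: "t \<ge> 0" using init' neg t by (cases "t \<le> 0") auto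
  have tZ: "t \<in> Z" using t0 neg unfolding Z_def by auto
  have contm: "continuous_on {0..} (\<lambda>u. min (T u) (min (I u) (V u)))"
    using params(10) by (intro continuous_intros continuous_on_subset[OF contT] continuous_on_subset[OF contI] continuous_on_subset[OF contV]) auto
  have clZ: "closed Z" unfolding Z_def by (rule continuous_closed_preimage[OF contm]) auto
  define t1 where "t1 = Inf Z"
  have bdd: "bdd_below Z" unfolding Z_def by (auto intro: bdd_belowI[of _ 0])
  have t1Z: "t1 \<in> Z" unfolding t1_def using closed_contains_Inf[OF _ bdd clZ] tZ by auto
  have t1ge: "t1 \<ge> 0" using t1Z unfolding Z_def by auto
  have before: "u \<ge> -tau \<Longrightarrow> u < t1 \<Longrightarrow> T u > 0 \<and> I u > 0 \<and> V u > 0" for u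
  proof -
    assume u: "u \<ge> -tau" "u < t1"
    show ?thesis
    proof (cases "u \<le> 0")
      case True then show ?thesis using init' u by auto
    next
      case False
      have "u \<notin> Z" using u cInf_lower[OF _ bdd, of u] unfolding t1_def by force
      then show ?thesis using False unfolding Z_def by auto
    qed
  qed
  have "continuous_on {0..t1} (\<lambda>u. \<bar>T u\<bar> + \<bar>I u\<bar> + \<bar>V u\<bar>)"
    using params(10) by (intro continuous_intros continuous_on_subset[OF contT] continuous_on_subset[OF contI] continuous_on_subset[OF contV]) auto
  then obtain M where M: "\<And>u. u \<in> {0..t1} \<Longrightarrow> \<bar>\<bar>T u\<bar> + \<bar>I u\<bar> + \<bar>V u\<bar>\<bar> \<le> M"
    using cont_bound by blast
  define K where "K = d + mu + c + a*M/Tm + b*M"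
  have contS: "continuous_on {0..t1} X" if "continuous_on {-tau..} X" for X :: "real \<Rightarrow> real"
    by (rule continuous_on_subset[OF that]) (use params(10) in auto)
  have "T t1 > 0"
  proof (rule exp_growth[OF t1ge contS[OF contT], of fT K])
    show "T 0 > 0" using init' params(10) by auto
  next
    fix u assume u: "0 < u" "u < t1"
    show "(T has_real_derivative fT u) (at u)" using derT[of u] u at0[of u] by simp
    have p: "T u > 0" "I u > 0" "V u > 0" using before[of u] u params(10) by auto
    have Mu: "T u \<le> M" "I u \<le> M" "V u \<le> M" using M[of u] u p by auto
    have "incid b al (T u) (V u) \<le> b * T u * V u" using p by (intro incid_le) auto
    also have "\<dots> \<le> (b * T u) * M" using Mu p params by (intro mult_left_mono) auto
    also have "\<dots> = b * M * T u" by (simp add: mult_ac)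
    finally have i1: "incid b al (T u) (V u) \<le> b * M * T u" .
    have i2: "a * T u * ((T u + I u) / Tm) \<le> a * M / Tm * T u"
    proof -
      have "(T u + I u) \<le> M" using M[of u] u p by auto
      then have "a * T u * ((T u + I u) / Tm) \<le> a * T u * (M / Tm)" using params p
        by (intro mult_left_mono divide_right_mono) auto
      then show ?thesis by (simp add: algebra_simps)
    qed
    have e1: "a*T u*(1-(T u+I u)/Tm) = a*T u - a*T u*((T u+I u)/Tm)" by (simp add: algebra_simps)
    have e2: "K*T u = d*T u + mu*T u + c*T u + a*M/Tm*T u + b*M*T u" unfolding K_def by (simp add: algebra_simps)
    have n: "mu*T u \<ge> 0" "c*T u \<ge> 0" "a*T u \<ge> 0" using p params by auto
    show "fT u \<ge> - K * T u" unfolding fT_def using i1 i2 e1 e2 n params(1) by linarith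
  qed
  moreover have "I t1 > 0"
  proof (rule exp_growth[OF t1ge contS[OF contI], of fI K])
    show "I 0 > 0" using init' params(10) by auto
  next
    fix u assume u: "0 < u" "u < t1"
    show "(I has_real_derivative fI u) (at u)" using derI[of u] u at0[of u] by simp
    have p: "T u > 0" "I u > 0" "V u > 0" using before[of u] u params(10) by auto
    have pd: "T (u - tau) > 0" "V (u - tau) > 0" using before[of "u - tau"] u params(10) by auto
    have i0: "incid b al (T (u - tau)) (V (u - tau)) \<ge> 0" using pd by (intro incid_nonneg) auto
    have i2: "a * I u * ((T u + I u) / Tm) \<le> a * M / Tm * I u"
    proof -
      have "(T u + I u) \<le> M" using M[of u] u p by auto
      then have "a * I u * ((T u + I u) / Tm) \<le> a * I u * (M / Tm)" using params p
        by (intro mult_left_mono divide_right_mono) auto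
      then show ?thesis by (simp add: algebra_simps)
    qed
    have M0: "M \<ge> 0" using M[of u] u by auto
    have e1: "a*I u*(1-(T u+I u)/Tm) = a*I u - a*I u*((T u+I u)/Tm)" by (simp add: algebra_simps)
    have e2: "K*I u = d*I u + mu*I u + c*I u + a*M/Tm*I u + b*M*I u" unfolding K_def by (simp add: algebra_simps)
    have n: "d*I u \<ge> 0" "c*I u \<ge> 0" "a*I u \<ge> 0" "b*M*I u \<ge> 0" using p params M0 by auto
    show "fI u \<ge> - K * I u" unfolding fI_def using i0 i2 e1 e2 n by linarith
  qed
  moreover have "V t1 > 0"
  proof (rule exp_growth[OF t1ge contS[OF contV], of fV K])
    show "V 0 > 0" using init' params(10) by auto
  next
    fix u assume u: "0 < u" "u < t1"
    show "(V has_real_derivative fV u) (at u)" using derV[of u] u at0[of u] by simp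
    have p: "T u > 0" "I u > 0" "V u > 0" using before[of u] u params(10) by auto
    have M0: "M \<ge> 0" using M[of u] u by auto
    have e2: "K*V u = d*V u + mu*V u + c*V u + a*M/Tm*V u + b*M*V u" unfolding K_def by (simp add: algebra_simps)
    have n: "d*V u \<ge> 0" "mu*V u \<ge> 0" "a*M/Tm*V u \<ge> 0" "b*M*V u \<ge> 0" "p*I u \<ge> 0" using p params M0 by auto
    show "fV u \<ge> - K * V u" unfolding fV_def using e2 n by linarith
  qed
  ultimately show False using t1Z unfolding Z_def by auto
qed

end


lemma gg_nonneg: "y > 0 \<Longrightarrow> gg y \<ge> 0"
  unfolding gg_def using ln_le_minus_one[of y] by simp

lemma gg_sqrt: assumes "y > 0" shows "(sqrt y - 1)^2 \<le> gg y"
proof -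
  have sy: "sqrt y > 0" using assms by simp
  have "ln y = 2 * ln (sqrt y)" using assms by (simp add: ln_sqrt)
  also have "\<dots> \<le> 2 * (sqrt y - 1)" using ln_le_minus_one[OF sy] by simp
  finally have "ln y \<le> 2 * (sqrt y - 1)" .
  moreover have "(sqrt y - 1)^2 = y - 2 * sqrt y + 1" using assms by (simp add: power2_diff)
  ultimately show ?thesis unfolding gg_def by simp
qed

lemma gg_upper: assumes "y > 0" shows "gg y \<le> (y - 1)^2 / y"
proof -
  have "ln (1/y) \<le> 1/y - 1" using assms by (intro ln_le_minus_one) simp
  then have "- ln y \<le> 1/y - 1" using assms by (simp add: ln_div)
  then have "gg y \<le> y - 2 + 1/y" unfolding gg_def by simp
  also have "y - 2 + 1/y = (y - 1)^2 / y" using assms by (simp add: field_simps power2_eq_square)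
  finally show ?thesis .
qed

lemma gg_deriv:
  assumes "(X has_real_derivative X') (at t within S)" "X t > 0" "k > 0"
  shows "((\<lambda>t. k * gg (X t / k)) has_real_derivative (1 - k / X t) * X') (at t within S)"
proof -
  have "((\<lambda>t. k * (X t / k - 1 - ln (X t / k))) has_real_derivative
          k * (X' / k - 0 - (X' / k) / (X t / k))) (at t within S)"
    using assms by (auto intro!: derivative_eq_intros)
  moreover have "k * (X' / k - 0 - (X' / k) / (X t / k)) = (1 - k / X t) * X'"
    using assms by (simp add: field_simps)
  ultimately show ?thesis unfolding gg_def by simp
qed

locale dde_eq = dde +
  assumes eqpos: "Ts > 0" "Is > 0" "Vs > 0"
  and eq1: "s - d*Ts + a*Ts*(1-(Ts+Is)/Tm) - incid b al Ts Vs = 0"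
  and eq2: "incid b al Ts Vs + a*Is*(1-(Ts+Is)/Tm) - mu*Is = 0"
  and eq3: "p*Is - c*Vs = 0"
begin

definition "fs = incid b al Ts Vs"
definition "G u = gg (incid b al (T u) (V u) / fs)"
definition "H x = integral {-tau..x} G"
definition "L t = Ts * gg (T t / Ts) + Is * gg (I t / Is) + (fs / (p * Is)) * (Vs * gg (V t / Vs))
   + fs * (H t - H (t - tau))"
definition "W t = (s/(Ts+Is))*(T t-Ts)^2/T t + a*((T t+I t)-(Ts+Is))^2/Tm
   + fs*al*(V t-Vs)^2/(Vs*(1+al*Vs)*(1+al*V t))"
definition "DL t = (1 - Ts / T t) * fT t + (1 - Is / I t) * fI t + (fs / (p * Is)) * ((1 - Vs / V t) * fV t)
   + fs * (G t - G (t - tau))"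

lemma fs_pos: "fs > 0" unfolding fs_def using eqpos params by (simp add: incid_pos)

lemma G_nonneg: "u \<ge> -tau \<Longrightarrow> G u \<ge> 0"
  unfolding G_def using positive[of u] params fs_pos by (intro gg_nonneg divide_pos_pos incid_pos) auto

lemma G_cont: "continuous_on {-tau..} G"
proof -
  have pos: "u \<in> {-tau..} \<Longrightarrow> b * T u * V u / (1 + al * V u) / fs > 0" for u
    using positive[of u] params fs_pos by (auto intro!: divide_pos_pos mult_pos_pos add_pos_pos)
  have den: "u \<in> {-tau..} \<Longrightarrow> 1 + al * V u \<noteq> 0" for u
  proof -
    assume "u \<in> {-tau..}"
    then have "V u > 0" using positive[of u] by auto
    then have "al * V u > 0" using params by simp
    then show ?thesis by linarith
  qed
  have cY: "continuous_on {-tau..} (\<lambda>u. b * T u * V u / (1 + al * V u) / fs)"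
    by (intro continuous_on_divide continuous_on_mult continuous_on_const continuous_on_add contT contV)
       (use den fs_pos in auto)
  have "continuous_on {-tau..} (\<lambda>u. b * T u * V u / (1 + al * V u) / fs - 1 - ln (b * T u * V u / (1 + al * V u) / fs))"
    by (intro continuous_on_diff continuous_on_const continuous_on_ln cY) (use pos in force)
  then show ?thesis unfolding G_def gg_def incid_def .
qed

lemma H_deriv: assumes "u \<ge> -tau" shows "(H has_real_derivative G u) (at u within {-tau..})"
proof -
  have c: "continuous_on {-tau..u+1} G" by (rule continuous_on_subset[OF G_cont]) auto
  have "(H has_real_derivative G u) (at u within {-tau..u+1})"
    unfolding H_def using integral_has_real_derivative[OF c, of u] assms by simp
  moreover have "at u within {-tau..u+1} = at u within {-tau..}"
    by (rule at_within_nhd[of _ "{..<u+1}"]) auto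
  ultimately show ?thesis by simp
qed

lemma H_shift_deriv: assumes "t \<ge> 0"
  shows "((\<lambda>t. H (t - tau)) has_real_derivative G (t - tau)) (at t within {0..})"
proof -
  have img: "(\<lambda>t. t - tau) ` {0..} = {-tau..}"
  proof (auto)
    fix x assume "-tau \<le> x" then show "x \<in> (\<lambda>t. t - tau) ` {0..}"
      by (intro image_eqI[of _ _ "x+tau"]) auto
  qed
  have "(H has_real_derivative G (t - tau)) (at ((\<lambda>t. t - tau) t) within (\<lambda>t. t - tau) ` {0..})"
    unfolding img using H_deriv[of "t - tau"] assms by simp
  moreover have "((\<lambda>t. t - tau) has_real_derivative 1) (at t within {0..})"
    by (auto intro!: derivative_eq_intros)
  ultimately have "(H \<circ> (\<lambda>t. t - tau) has_real_derivative G (t - tau) * 1) (at t within {0..})"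
    by (rule DERIV_image_chain)
  then show ?thesis by (simp add: o_def)
qed

lemma L_deriv: assumes "t \<ge> 0" shows "(L has_real_derivative DL t) (at t within {0..})"
proof -
  have p: "T t > 0" "I t > 0" "V t > 0" using positive[of t] assms params by auto
  have H0: "(H has_real_derivative G t) (at t within {0..})"
    using DERIV_subset[OF H_deriv[of t]] assms params by auto
  have d1: "((\<lambda>t. Ts * gg (T t / Ts)) has_real_derivative (1 - Ts / T t) * fT t) (at t within {0..})"
    by (rule gg_deriv[OF derT[OF assms] p(1) eqpos(1)])
  have d2: "((\<lambda>t. Is * gg (I t / Is)) has_real_derivative (1 - Is / I t) * fI t) (at t within {0..})"
    by (rule gg_deriv[OF derI[OF assms] p(2) eqpos(2)])
  have d3: "((\<lambda>t. (fs / (p * Is)) * (Vs * gg (V t / Vs))) has_real_derivative (fs / (p * Is)) * ((1 - Vs / V t) * fV t)) (at t within {0..})"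
    by (rule DERIV_cmult[OF gg_deriv[OF derV[OF assms] p(3) eqpos(3)]])
  have d4: "((\<lambda>t. fs * (H t - H (t - tau))) has_real_derivative fs * (G t - G (t - tau))) (at t within {0..})"
    by (rule DERIV_cmult[OF DERIV_diff[OF H0 H_shift_deriv[OF assms]]])
  have "((\<lambda>t. Ts * gg (T t / Ts) + Is * gg (I t / Is) + (fs / (p * Is)) * (Vs * gg (V t / Vs)) + fs * (H t - H (t - tau)))
     has_real_derivative (1 - Ts / T t) * fT t + (1 - Is / I t) * fI t + (fs / (p * Is)) * ((1 - Vs / V t) * fV t)
   + fs * (G t - G (t - tau))) (at t within {0..})"
    by (intro DERIV_add d1 d2 d3 d4)
  then show ?thesis unfolding L_def[abs_def] DL_def .
qed

lemma DL_le: assumes "t \<ge> 0" shows "DL t \<le> - W t"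
proof -
  have p: "T t > 0" "I t > 0" "V t > 0" using positive[of t] assms params by auto
  have pd: "T (t - tau) > 0" "V (t - tau) > 0" using positive[of "t - tau"] assms params by auto
  have eq2': "incid b al Ts Vs + a*Is*(1-(Ts+Is)/Tm) - d*Is = 0" using eq2 dmu by simp
  from key_alg[OF p pd eqpos params(3,4,5,6,8,9) eq1 eq2' eq3]
  show ?thesis unfolding DL_def W_def fT_def fI_def fV_def G_def fs_def using dmu
    by (simp add: mult.assoc)
qed

lemma W_nonneg: assumes "t \<ge> 0" shows "W t \<ge> 0"
proof -
  have p: "T t > 0" "I t > 0" "V t > 0" using positive[of t] assms params by auto
  have "1 + al * V t > 0" "1 + al * Vs > 0" using p eqpos params by (simp_all add: add_pos_pos)
  then show ?thesis unfolding W_def using p eqpos params fs_pos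
    by (intro add_nonneg_nonneg divide_nonneg_pos mult_nonneg_nonneg) auto
qed

lemma L_cont: "continuous_on {0..} L"
  by (rule DERIV_continuous_on[OF L_deriv]) auto

lemma L_mono: assumes "0 \<le> x" "x \<le> y" shows "L y \<le> L x"
proof (rule DERIV_nonpos_imp_decreasing_open[OF assms(2)])
  fix t assume t: "x < t" "t < y"
  then have "(L has_real_derivative DL t) (at t)" using L_deriv[of t] at0[of t] assms by simp
  moreover have "DL t \<le> 0" using DL_le[of t] W_nonneg[of t] t assms by simp
  ultimately show "\<exists>y. (L has_real_derivative y) (at t) \<and> y \<le> 0" by blast
next
  show "continuous_on {x..y} L" by (rule continuous_on_subset[OF L_cont]) (use assms in auto)
qed

lemma int_term: assumes "t \<ge> 0" shows "H t - H (t - tau) = integral {t - tau..t} G"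
proof -
  have c: "continuous_on {-tau..t} G" by (rule continuous_on_subset[OF G_cont]) auto
  have "integral {-tau..t - tau} G + integral {t - tau..t} G = integral {-tau..t} G"
    by (rule Henstock_Kurzweil_Integration.integral_combine) (use assms params integrable_continuous_interval[OF c] in auto)
  then show ?thesis unfolding H_def by simp
qed

lemma int_nonneg: assumes "t \<ge> 0" shows "H t - H (t - tau) \<ge> 0"
proof -
  have c: "continuous_on {t - tau..t} G" by (rule continuous_on_subset[OF G_cont]) (use assms in auto)
  show ?thesis unfolding int_term[OF assms]
    by (rule integral_nonneg[OF integrable_continuous_interval[OF c]]) (use G_nonneg assms in auto)
qed

lemma L_lower: assumes "t \<ge> 0"
  shows "Ts * gg (T t / Ts) \<le> L t" "Is * gg (I t / Is) \<le> L t" "(fs / (p * Is)) * (Vs * gg (V t / Vs)) \<le> L t"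
proof -
  have p: "T t > 0" "I t > 0" "V t > 0" using positive[of t] assms params by auto
  have n: "Ts * gg (T t / Ts) \<ge> 0" "Is * gg (I t / Is) \<ge> 0" "(fs / (p * Is)) * (Vs * gg (V t / Vs)) \<ge> 0"
    "fs * (H t - H (t - tau)) \<ge> 0"
    using p eqpos params fs_pos int_nonneg[OF assms]
    by (auto intro!: mult_nonneg_nonneg gg_nonneg divide_nonneg_pos)
  show "Ts * gg (T t / Ts) \<le> L t" "Is * gg (I t / Is) \<le> L t" "(fs / (p * Is)) * (Vs * gg (V t / Vs)) \<le> L t"
    unfolding L_def using n by linarith+
qed

end


lemma gg_bound: assumes "y > 0" "k > 0" "k * gg y \<le> C" shows "y \<le> (1 + sqrt (C/k))^2"
proof -
  have "gg y \<le> C/k" using assms by (simp add: field_simps mult.commute)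
  then have "(sqrt y - 1)^2 \<le> C/k" using gg_sqrt[OF assms(1)] by linarith
  then have "sqrt ((sqrt y - 1)^2) \<le> sqrt (C/k)" by (rule real_sqrt_le_mono)
  then have "\<bar>sqrt y - 1\<bar> \<le> sqrt (C/k)" by simp
  then have "sqrt y \<le> 1 + sqrt (C/k)" by linarith
  then have "(sqrt y)^2 \<le> (1 + sqrt (C/k))^2" by (rule power_mono) (use assms(1) in simp)
  then show ?thesis using less_imp_le[OF assms(1)] by simp
qed

lemma gg_close: assumes "y > 0" "k > 0" "r > 0" "k * gg y < k * r^2" shows "\<bar>y - 1\<bar> < r * (2 + r)"
proof -
  have "gg y < r^2" using assms by simp
  then have "(sqrt y - 1)^2 < r^2" using gg_sqrt[OF assms(1)] by linarith
  then have "sqrt ((sqrt y - 1)^2) < sqrt (r^2)" by (rule real_sqrt_less_mono)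
  then have a: "\<bar>sqrt y - 1\<bar> < r" using assms(3) by simp
  have "y - 1 = (sqrt y - 1) * (sqrt y + 1)" using assms(1) by (simp add: algebra_simps)
  moreover have "sqrt y + 1 > 0" using assms(1) by (simp add: add_pos_pos)
  ultimately have "\<bar>y - 1\<bar> = \<bar>sqrt y - 1\<bar> * (sqrt y + 1)" by (simp add: abs_mult)
  also have "\<dots> < r * (2 + r)"
    by (rule mult_strict_mono) (use a assms in auto)
  finally show ?thesis .
qed

definition rz :: "real \<Rightarrow> real \<Rightarrow> real" where "rz e X = min 1 (e / (3 * X))"

lemma rz_pos: "e > 0 \<Longrightarrow> X > 0 \<Longrightarrow> rz e X > 0" unfolding rz_def by simp

lemma gg_close2: assumes "X > 0" "Xs > 0" "k > 0" "e > 0" "k * gg (X / Xs) < k * (rz e Xs)^2"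
  shows "\<bar>X - Xs\<bar> < e"
proof -
  define r where "r = rz e Xs"
  have r: "r > 0" "r \<le> 1" "r \<le> e / (3 * Xs)" using assms unfolding r_def rz_def by auto
  have h: "k * gg (X/Xs) < k * r^2" using assms(5) unfolding r_def .
  have "\<bar>X / Xs - 1\<bar> < r * (2 + r)" by (rule gg_close[OF divide_pos_pos[OF assms(1,2)] assms(3) r(1) h])
  also have "\<dots> \<le> r * 3" using r by (intro mult_left_mono) auto
  also have "\<dots> \<le> e / Xs" using r assms by (simp add: field_simps)
  finally have "\<bar>X / Xs - 1\<bar> < e / Xs" .
  moreover have "\<bar>X - Xs\<bar> = Xs * \<bar>X / Xs - 1\<bar>" using assms
    by (simp add: abs_mult[symmetric] field_simps)
  moreover have "Xs * \<bar>X / Xs - 1\<bar> < Xs * (e / Xs)"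
    by (rule mult_strict_left_mono[OF calculation(1) assms(2)])
  ultimately show ?thesis using assms(2) by simp
qed

lemma lip:
  fixes F F' :: "real \<Rightarrow> real"
  assumes der: "\<And>t. t \<ge> 0 \<Longrightarrow> (F has_real_derivative F' t) (at t within {0..})"
    and bnd: "\<And>t. t \<ge> t0 \<Longrightarrow> \<bar>F' t\<bar> \<le> M"
    and "0 \<le> t0" "t0 \<le> x" "x \<le> y"
  shows "\<bar>F y - F x\<bar> \<le> M * (y - x)"
proof -
  have cont: "continuous_on {x..y} F"
    by (rule DERIV_continuous_on[of _ _ F']) (use assms in \<open>auto intro: DERIV_subset[OF der]\<close>)
  have dat: "x < u \<Longrightarrow> (F has_real_derivative F' u) (at u)" for u
    using der[of u] at0[of u] assms by simp
  have "M * x - F x \<le> M * y - F y"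
  proof (rule DERIV_nonneg_imp_increasing_open[OF assms(5)])
    fix u assume u: "x < u" "u < y"
    have "((\<lambda>t. M * t - F t) has_real_derivative M - F' u) (at u)"
      by (auto intro!: derivative_eq_intros dat u)
    moreover have "M - F' u \<ge> 0"
    proof -
      have "\<bar>F' u\<bar> \<le> M" using bnd[of u] u assms(4) by auto
      then show ?thesis by linarith
    qed
    ultimately show "\<exists>z. ((\<lambda>t. M * t - F t) has_real_derivative z) (at u) \<and> 0 \<le> z" by blast
  next
    show "continuous_on {x..y} (\<lambda>t. M * t - F t)" by (intro continuous_intros cont)
  qed
  moreover have "M * x + F x \<le> M * y + F y"
  proof (rule DERIV_nonneg_imp_increasing_open[OF assms(5)])
    fix u assume u: "x < u" "u < y"
    have "((\<lambda>t. M * t + F t) has_real_derivative M + F' u) (at u)"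
      by (auto intro!: derivative_eq_intros dat u)
    moreover have "M + F' u \<ge> 0"
    proof -
      have "\<bar>F' u\<bar> \<le> M" using bnd[of u] u assms(4) by auto
      then show ?thesis by linarith
    qed
    ultimately show "\<exists>z. ((\<lambda>t. M * t + F t) has_real_derivative z) (at u) \<and> 0 \<le> z" by blast
  next
    show "continuous_on {x..y} (\<lambda>t. M * t + F t)" by (intro continuous_intros cont)
  qed
  ultimately show ?thesis by (simp add: algebra_simps abs_le_iff)
qed

lemma attract:
  fixes L DL F :: "real \<Rightarrow> real"
  assumes Lder: "\<And>t. t > 0 \<Longrightarrow> (L has_real_derivative DL t) (at t)"
    and Lcont: "continuous_on {0..} L"
    and DLle: "\<And>t. t > 0 \<Longrightarrow> DL t \<le> - \<kappa> * (F t - c)^2"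
    and kp: "\<kappa> > 0"
    and Lnn: "\<And>t. t \<ge> 0 \<Longrightarrow> L t \<ge> 0"
    and Flip: "\<And>x y. t0 \<le> x \<Longrightarrow> x \<le> y \<Longrightarrow> \<bar>F y - F x\<bar> \<le> M * (y - x)"
    and t0: "t0 \<ge> 0" and M: "M > 0"
  shows "(F \<longlongrightarrow> c) at_top"
proof -
  have dec: "L y + K * y \<le> L x + K * x"
    if xy: "0 \<le> x" "x \<le> y" and K: "\<And>u. x < u \<Longrightarrow> u < y \<Longrightarrow> DL u + K \<le> 0" for K x y
  proof (rule DERIV_nonpos_imp_decreasing_open[OF xy(2)])
    fix u assume u: "x < u" "u < y"
    have "((\<lambda>t. L t + K * t) has_real_derivative DL u + K) (at u)"
      using u xy by (auto intro!: derivative_eq_intros Lder)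
    then show "\<exists>z. ((\<lambda>t. L t + K * t) has_real_derivative z) (at u) \<and> z \<le> 0" using K[OF u] by blast
  next
    show "continuous_on {x..y} (\<lambda>t. L t + K * t)"
      by (intro continuous_intros continuous_on_subset[OF Lcont]) (use xy in auto)
  qed
  have mono: "L y \<le> L x" if "0 \<le> x" "x \<le> y" for x y
  proof -
    have "L y + 0 * y \<le> L x + 0 * x"
    proof (rule dec[OF that])
      fix u assume "x < u" "u < y"
      then have "u > 0" using that by linarith
      then have "DL u \<le> - \<kappa> * (F u - c)^2" by (rule DLle)
      moreover have "\<kappa> * (F u - c)^2 \<ge> 0" using kp by simp
      ultimately show "DL u + 0 \<le> 0" by linarith
    qed
    then show ?thesis by simp
  qed
  show ?thesis unfolding tendsto_iff
  proof (intro allI impI)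
    fix e :: real assume e: "e > 0"
    show "eventually (\<lambda>t. dist (F t) c < e) at_top"
    proof (rule ccontr)
      assume ne: "\<not> eventually (\<lambda>t. dist (F t) c < e) at_top"
      have freq: "\<exists>t\<ge>N. \<bar>F t - c\<bar> \<ge> e" for N
        using ne unfolding eventually_at_top_linorder dist_real_def by (meson not_le)
      define h where "h = e / (2 * M)"
      define D where "D = \<kappa> * (e/2)^2 * h"
      have h: "h > 0" "M * h = e / 2" using e M unfolding h_def by auto
      have D: "D > 0" using kp e h unfolding D_def by simp
      define l where "l = Inf (L ` {0..})"
      have bdd: "bdd_below (L ` {0..})" by (rule bdd_belowI[of _ 0]) (use Lnn in auto)
      have lD: "l < l + D" using D by simp
      have "\<exists>x\<in>{0..}. L x < l + D"
        using cInf_less_iff[OF _ bdd, of "l + D"] lD unfolding l_def by auto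
      then obtain x0 where x0: "x0 \<ge> 0" "L x0 < l + D" by auto
      obtain t where t: "t \<ge> max x0 t0" "\<bar>F t - c\<bar> \<ge> e" using freq by blast
      have tpos: "t \<ge> 0" using t x0 by linarith
      have "L (t + h) + (\<kappa> * (e/2)^2) * (t + h) \<le> L t + (\<kappa> * (e/2)^2) * t"
      proof (rule dec)
        show "0 \<le> t" "t \<le> t + h" using tpos h by auto
      next
        fix u assume u: "t < u" "u < t + h"
        have "\<bar>F u - F t\<bar> \<le> M * (u - t)" using Flip[of t u] t u by auto
        also have "\<dots> \<le> M * h" using u M by (intro mult_left_mono) auto
        finally have "\<bar>F u - c\<bar> \<ge> e / 2" using t h by linarith
        then have "(e/2)^2 \<le> \<bar>F u - c\<bar>^2" by (rule power_mono) (use e in auto)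
        then have sq: "(e/2)^2 \<le> (F u - c)^2" by simp
        have "DL u \<le> - \<kappa> * (F u - c)^2" using u tpos by (intro DLle) auto
        moreover have "\<kappa> * (e/2)^2 \<le> \<kappa> * (F u - c)^2" using sq kp by (intro mult_left_mono) auto
        ultimately show "DL u + \<kappa> * (e/2)^2 \<le> 0" by linarith
      qed
      then have "L (t + h) \<le> L t - D" unfolding D_def by (simp add: algebra_simps)
      moreover have "L t \<le> L x0" using mono[of x0 t] x0 t by auto
      moreover have "l \<le> L (t + h)" unfolding l_def using tpos h by (intro cInf_lower[OF _ bdd]) auto
      ultimately show False using x0 by linarith
    qed
  qed
qed


context dde_eq begin

definition "kV = (fs / (p * Is)) * Vs"
definition "BT = Ts * (1 + sqrt (L 0 / Ts))^2"
definition "BI = Is * (1 + sqrt (L 0 / Is))^2"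
definition "BV = Vs * (1 + sqrt (L 0 / kV))^2"

lemma kV_pos: "kV > 0" unfolding kV_def using fs_pos params eqpos by simp

lemma L_nonneg: "t \<ge> 0 \<Longrightarrow> L t \<ge> 0"
  using L_lower(1)[of t] gg_nonneg[of "T t / Ts"] positive[of t] params eqpos
  by (smt (verit) divide_pos_pos mult_nonneg_nonneg)

lemma bounds: assumes "t \<ge> 0" shows "T t \<le> BT" "I t \<le> BI" "V t \<le> BV"
proof -
  have p: "T t > 0" "I t > 0" "V t > 0" using positive[of t] assms params by auto
  have L0: "L t \<le> L 0" using L_mono[of 0 t] assms by simp
  have "T t / Ts \<le> (1 + sqrt (L 0 / Ts))^2"
    using gg_bound[of "T t / Ts" Ts "L 0"] L_lower(1)[OF assms] L0 p eqpos by simp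
  then show "T t \<le> BT" unfolding BT_def using eqpos by (simp add: pos_divide_le_eq mult.commute)
  have "I t / Is \<le> (1 + sqrt (L 0 / Is))^2"
    using gg_bound[of "I t / Is" Is "L 0"] L_lower(2)[OF assms] L0 p eqpos by simp
  then show "I t \<le> BI" unfolding BI_def using eqpos by (simp add: pos_divide_le_eq mult.commute)
  have "kV * gg (V t / Vs) \<le> L 0" using L_lower(3)[OF assms] L0 unfolding kV_def by (simp add: mult.assoc)
  then have "V t / Vs \<le> (1 + sqrt (L 0 / kV))^2"
    using gg_bound[of "V t / Vs" kV "L 0"] kV_pos p eqpos by simp
  then show "V t \<le> BV" unfolding BV_def using eqpos by (simp add: pos_divide_le_eq mult.commute)
qed

definition "MT = s + d*BT + a*BT + a*BT*((BT+BI)/Tm) + b*BT*BV"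
definition "MI = b*BT*BV + a*BI + a*BI*((BT+BI)/Tm) + mu*BI"
definition "MV = p*BI + c*BV"

lemma fT_bd: assumes "t \<ge> tau" shows "\<bar>fT t\<bar> \<le> MT"
proof -
  have t0: "t \<ge> 0" using assms params by linarith
  have p: "T t > 0" "I t > 0" "V t > 0" using positive[of t] t0 params by auto
  have B: "T t \<le> BT" "I t \<le> BI" "V t \<le> BV" using bounds[OF t0] by auto
  have inc0: "incid b al (T t) (V t) \<ge> 0" using p by (intro incid_nonneg) auto
  have "incid b al (T t) (V t) \<le> b * T t * V t" using p by (intro incid_le) auto
  also have "\<dots> \<le> b * BT * BV" using p B params by (intro mult_mono) auto
  finally have inc: "incid b al (T t) (V t) \<le> b * BT * BV" .
  have e1: "fT t = s - d*T t + a*T t - a*T t*((T t + I t)/Tm) - incid b al (T t) (V t)"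
    unfolding fT_def by (simp add: algebra_simps)
  have b1: "d*T t \<le> d*BT" "a*T t \<le> a*BT" using B params by auto
  have b2: "a*T t*((T t + I t)/Tm) \<le> a*BT*((BT+BI)/Tm)"
    using B p params by (intro mult_mono divide_right_mono) auto
  have n: "d*T t \<ge> 0" "a*T t \<ge> 0" "a*T t*((T t + I t)/Tm) \<ge> 0" using p params by auto
  show ?thesis unfolding MT_def abs_le_iff e1 using b1 b2 n inc inc0 params(1) by linarith
qed

lemma fI_bd: assumes "t \<ge> tau" shows "\<bar>fI t\<bar> \<le> MI"
proof -
  have t0: "t \<ge> 0" "t - tau \<ge> 0" using assms params by linarith+
  have p: "T t > 0" "I t > 0" "V t > 0" using positive[of t] t0 params by auto
  have pd: "T (t-tau) > 0" "V (t-tau) > 0" using positive[of "t-tau"] t0 params by auto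
  have B: "T t \<le> BT" "I t \<le> BI" "V t \<le> BV" using bounds[OF t0(1)] by auto
  have Bd: "T (t-tau) \<le> BT" "V (t-tau) \<le> BV" using bounds[OF t0(2)] by auto
  have inc0: "incid b al (T (t-tau)) (V (t-tau)) \<ge> 0" using pd by (intro incid_nonneg) auto
  have "incid b al (T (t-tau)) (V (t-tau)) \<le> b * T (t-tau) * V (t-tau)" using pd by (intro incid_le) auto
  also have "\<dots> \<le> b * BT * BV" using pd Bd params by (intro mult_mono) auto
  finally have inc: "incid b al (T (t-tau)) (V (t-tau)) \<le> b * BT * BV" .
  have e1: "fI t = incid b al (T (t-tau)) (V (t-tau)) + a*I t - a*I t*((T t + I t)/Tm) - mu*I t"
    unfolding fI_def by (simp add: algebra_simps)
  have b1: "mu*I t \<le> mu*BI" "a*I t \<le> a*BI" using B params by auto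
  have b2: "a*I t*((T t + I t)/Tm) \<le> a*BI*((BT+BI)/Tm)"
    using B p params by (intro mult_mono divide_right_mono) auto
  have n: "mu*I t \<ge> 0" "a*I t \<ge> 0" "a*I t*((T t + I t)/Tm) \<ge> 0" using p params by auto
  show ?thesis unfolding MI_def abs_le_iff e1 using b1 b2 n inc inc0 by linarith
qed

lemma fV_bd: assumes "t \<ge> tau" shows "\<bar>fV t\<bar> \<le> MV"
proof -
  have t0: "t \<ge> 0" using assms params by linarith
  have p: "T t > 0" "I t > 0" "V t > 0" using positive[of t] t0 params by auto
  have B: "T t \<le> BT" "I t \<le> BI" "V t \<le> BV" using bounds[OF t0] by auto
  have b1: "p*I t \<le> p*BI" "c*V t \<le> c*BV" using B params by auto
  have n: "p*I t \<ge> 0" "c*V t \<ge> 0" using p params by auto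
  show ?thesis unfolding MV_def fV_def abs_le_iff using b1 n by linarith
qed

lemma W_lower: assumes "t \<ge> 0"
  shows "W t \<ge> (s/((Ts+Is)*BT)) * (T t - Ts)^2"
    "W t \<ge> (a/Tm) * ((T t + I t) - (Ts+Is))^2"
    "W t \<ge> (fs*al/(Vs*(1+al*Vs)*(1+al*BV))) * (V t - Vs)^2"
proof -
  have p: "T t > 0" "I t > 0" "V t > 0" using positive[of t] assms params by auto
  have B: "T t \<le> BT" "I t \<le> BI" "V t \<le> BV" using bounds[OF assms] by auto
  have q: "1 + al * V t > 0" "1 + al * Vs > 0" using p eqpos params by (simp_all add: add_pos_pos)
  have Ns: "Ts + Is > 0" using eqpos by simp
  have "BV > 0" using B p by linarith
  then have "al * BV > 0" using params by simp
  then have qB: "1 + al * BV > 0" by linarith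
  define w1 where "w1 = (s/(Ts+Is))*(T t-Ts)^2/T t"
  define w2 where "w2 = a*((T t+I t)-(Ts+Is))^2/Tm"
  define w3 where "w3 = fs*al*(V t-Vs)^2/(Vs*(1+al*Vs)*(1+al*V t))"
  have W: "W t = w1 + w2 + w3" unfolding W_def w1_def w2_def w3_def by simp
  have n: "w1 \<ge> 0" "w2 \<ge> 0" "w3 \<ge> 0" unfolding w1_def w2_def w3_def
    using p q eqpos params fs_pos Ns by (auto intro!: divide_nonneg_pos mult_nonneg_nonneg)
  have "(s/((Ts+Is)*BT)) * (T t - Ts)^2 = (s/(Ts+Is))*(T t-Ts)^2/BT" by simp
  also have "\<dots> \<le> w1" unfolding w1_def
    using B p params Ns by (intro divide_left_mono) auto
  finally show "W t \<ge> (s/((Ts+Is)*BT)) * (T t - Ts)^2" using W n by linarith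
  show "W t \<ge> (a/Tm) * ((T t + I t) - (Ts+Is))^2" using W n unfolding w2_def by simp
  have "(fs*al/(Vs*(1+al*Vs)*(1+al*BV))) * (V t - Vs)^2 = fs*al*(V t-Vs)^2/(Vs*(1+al*Vs)*(1+al*BV))"
    by simp
  also have "\<dots> \<le> w3" unfolding w3_def
    using B p params eqpos q qB fs_pos by (intro divide_left_mono mult_left_mono mult_pos_pos) auto
  finally show "W t \<ge> (fs*al/(Vs*(1+al*Vs)*(1+al*BV))) * (V t - Vs)^2" using W n by linarith
qed

lemma converge: "(T \<longlongrightarrow> Ts) at_top \<and> (I \<longlongrightarrow> Is) at_top \<and> (V \<longlongrightarrow> Vs) at_top"
proof -
  have Lder: "(L has_real_derivative DL t) (at t)" if "t > 0" for t
    using L_deriv[of t] at0[OF that] that by simp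
  have p0: "BT > 0" "BV > 0" using bounds[of 0] positive[of 0] params by fastforce+
  have M: "MT \<ge> 0" "MI \<ge> 0" "MV \<ge> 0"
    using fT_bd[of tau] fI_bd[of tau] fV_bd[of tau] by auto
  have tau0: "tau \<ge> 0" using params by simp
  have fT1: "\<bar>fT t\<bar> \<le> MT + 1" if "t \<ge> tau" for t using fT_bd[OF that] by linarith
  have fV1: "\<bar>fV t\<bar> \<le> MV + 1" if "t \<ge> tau" for t using fV_bd[OF that] by linarith
  have T: "(T \<longlongrightarrow> Ts) at_top"
  proof (rule attract[OF Lder L_cont _ _ L_nonneg _ tau0])
    show "DL t \<le> - (s/((Ts+Is)*BT)) * (T t - Ts)^2" if "t > 0" for t
      using DL_le[of t] W_lower(1)[of t] that by auto
    show "s/((Ts+Is)*BT) > 0" using params eqpos p0 by simp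
    show "\<bar>T y - T x\<bar> \<le> (MT + 1) * (y - x)" if "tau \<le> x" "x \<le> y" for x y
      by (rule lip[OF derT]) (use fT1 that tau0 in auto)
    show "MT + 1 > 0" using M by simp
  qed auto
  have N: "((\<lambda>t. T t + I t) \<longlongrightarrow> Ts + Is) at_top"
  proof (rule attract[OF Lder L_cont _ _ L_nonneg _ tau0])
    show "DL t \<le> - (a/Tm) * ((T t + I t) - (Ts + Is))^2" if "t > 0" for t
      using DL_le[of t] W_lower(2)[of t] that by auto
    show "a/Tm > 0" using params by simp
    show "\<bar>(T y + I y) - (T x + I x)\<bar> \<le> (MT + MI + 1) * (y - x)" if "tau \<le> x" "x \<le> y" for x y
    proof (rule lip[of "\<lambda>t. T t + I t" "\<lambda>t. fT t + fI t"])
      show "((\<lambda>t. T t + I t) has_real_derivative fT t + fI t) (at t within {0..})" if "t \<ge> 0" for t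
        using derT[OF that] derI[OF that] by (rule DERIV_add)
      show "\<bar>fT t + fI t\<bar> \<le> MT + MI + 1" if "t \<ge> tau" for t
        using fT_bd[OF that] fI_bd[OF that] by linarith
    qed (use that tau0 in auto)
    show "MT + MI + 1 > 0" using M by simp
  qed auto
  have V: "(V \<longlongrightarrow> Vs) at_top"
  proof (rule attract[OF Lder L_cont _ _ L_nonneg _ tau0])
    show "DL t \<le> - (fs*al/(Vs*(1+al*Vs)*(1+al*BV))) * (V t - Vs)^2" if "t > 0" for t
      using DL_le[of t] W_lower(3)[of t] that by auto
    show "fs*al/(Vs*(1+al*Vs)*(1+al*BV)) > 0" using params eqpos p0 fs_pos
      by (auto intro!: divide_pos_pos mult_pos_pos add_pos_pos)
    show "\<bar>V y - V x\<bar> \<le> (MV + 1) * (y - x)" if "tau \<le> x" "x \<le> y" for x y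
      by (rule lip[OF derV]) (use fV1 that tau0 in auto)
    show "MV + 1 > 0" using M by simp
  qed auto
  have "((\<lambda>t. (T t + I t) - T t) \<longlongrightarrow> (Ts + Is) - Ts) at_top" by (intro tendsto_diff N T)
  then have "(I \<longlongrightarrow> Is) at_top" by simp
  then show ?thesis using T V by simp
qed

end


definition Dz :: "real \<Rightarrow> real \<Rightarrow> real \<Rightarrow> real \<Rightarrow> real \<Rightarrow> real" where
  "Dz b al Ts Is Vs = min (min (Ts/2) (Is/2)) (min (Vs/2) (incid b al Ts Vs / (2*(b*(1/al+Ts)))))"
definition Cz :: "real \<Rightarrow> real \<Rightarrow> real \<Rightarrow> real \<Rightarrow> real \<Rightarrow> real \<Rightarrow> real \<Rightarrow> real" where
  "Cz b al p tau Ts Is Vs = 2/Ts + 2/Is + (incid b al Ts Vs/(p*Is))*(2/Vs) + 2*tau*(b*(1/al+Ts))^2/incid b al Ts Vs"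
definition Ez :: "real \<Rightarrow> real \<Rightarrow> real \<Rightarrow> real \<Rightarrow> real \<Rightarrow> real \<Rightarrow> real \<Rightarrow> real" where
  "Ez b al p Ts Is Vs e = min (Ts*(rz e Ts)^2) (min (Is*(rz e Is)^2) (((incid b al Ts Vs/(p*Is))*Vs)*(rz e Vs)^2))"

lemma comp_bound:
  assumes "X > 0" "Xs > 0" "\<bar>X - Xs\<bar> < \<delta>" "\<delta> \<le> Xs/2"
  shows "Xs * gg (X/Xs) \<le> 2*\<delta>^2/Xs"
proof -
  have y: "X/Xs > 0" using assms by simp
  have "Xs * gg (X/Xs) \<le> Xs * ((X/Xs - 1)^2/(X/Xs))"
    using gg_upper[OF y] assms(2) by (intro mult_left_mono) auto
  also have "\<dots> = (X - Xs)^2 / X" using assms(1,2) by (simp add: field_simps power2_eq_square)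
  also have "\<dots> \<le> \<delta>^2 / X"
  proof (rule divide_right_mono)
    have "\<bar>X - Xs\<bar>^2 \<le> \<delta>^2" using assms(3) by (intro power_mono) auto
    then show "(X - Xs)^2 \<le> \<delta>^2" by simp
  qed (use assms in auto)
  also have "\<dots> \<le> \<delta>^2 / (Xs/2)" using assms by (intro divide_left_mono) auto
  also have "\<dots> = 2*\<delta>^2/Xs" by simp
  finally show ?thesis .
qed

lemma psi_bounds:
  fixes al v vs :: real assumes "al > 0" "v > 0" "vs > 0"
  shows "v/(1+al * v) \<le> 1/al" "\<bar>v/(1+al * v) - vs/(1+al * vs)\<bar> \<le> \<bar>v - vs\<bar>"
proof -
  have q: "1 + al * v > 0" "1 + al * vs > 0" using assms by (simp_all add: add_pos_pos)
  show "v/(1+al * v) \<le> 1/al" using assms q by (simp add: field_simps)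
  have "v/(1+al * v) - vs/(1+al * vs) = (v - vs)/((1+al * v)*(1+al * vs))"
    using q by (simp add: field_simps)
  then have "\<bar>v/(1+al * v) - vs/(1+al * vs)\<bar> = \<bar>v - vs\<bar>/((1+al * v)*(1+al * vs))"
    using q by (simp add: abs_divide abs_mult)
  also have "\<dots> \<le> \<bar>v - vs\<bar>/1"
  proof (rule divide_left_mono)
    have "1 \<le> 1 + al * v" "1 \<le> 1 + al * vs" using assms by auto
    then show "1 \<le> (1+al * v)*(1+al * vs)" by (metis mult_mono' mult_1 zero_le_one)
  qed (use q in auto)
  finally show "\<bar>v/(1+al * v) - vs/(1+al * vs)\<bar> \<le> \<bar>v - vs\<bar>" by simp
qed

lemma incid_close:
  assumes "b > 0" "al > 0" "x > 0" "v > 0" "Ts > 0" "Vs > 0" "\<bar>x - Ts\<bar> \<le> \<delta>" "\<bar>v - Vs\<bar> \<le> \<delta>"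
  shows "\<bar>incid b al x v - incid b al Ts Vs\<bar> \<le> b*(1/al+Ts)*\<delta>"
proof -
  define pv where "pv = v/(1+al * v)"
  define ps where "ps = Vs/(1+al*Vs)"
  have pv: "pv \<le> 1/al" "pv \<ge> 0" "\<bar>pv - ps\<bar> \<le> \<bar>v - Vs\<bar>"
    using psi_bounds[of al v Vs] assms unfolding pv_def ps_def by (auto simp: add_pos_pos)
  have i1: "incid b al x v = b*x*pv" unfolding incid_def pv_def by simp
  have i2: "incid b al Ts Vs = b*Ts*ps" unfolding incid_def ps_def by simp
  have "incid b al x v - incid b al Ts Vs = b * ((x - Ts) * pv + Ts * (pv - ps))"
    unfolding i1 i2 by (simp add: algebra_simps)
  then have "\<bar>incid b al x v - incid b al Ts Vs\<bar> = b * \<bar>(x - Ts) * pv + Ts * (pv - ps)\<bar>"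
    using assms by (simp add: abs_mult)
  also have "\<dots> \<le> b * (\<delta> * (1/al) + Ts * \<delta>)"
  proof (rule mult_left_mono)
    have "\<bar>(x - Ts) * pv\<bar> \<le> \<delta> * (1/al)" unfolding abs_mult using pv assms
      by (intro mult_mono) auto
    moreover have "\<bar>Ts * (pv - ps)\<bar> \<le> Ts * \<delta>"
    proof -
      have "\<bar>Ts * (pv - ps)\<bar> = Ts * \<bar>pv - ps\<bar>" using assms(5) by (simp add: abs_mult)
      also have "\<dots> \<le> Ts * \<delta>" using pv assms by (intro mult_left_mono) auto
      finally show ?thesis .
    qed
    ultimately show "\<bar>(x - Ts) * pv + Ts * (pv - ps)\<bar> \<le> \<delta> * (1/al) + Ts * \<delta>" by linarith
  qed (use assms in auto)
  also have "\<dots> = b*(1/al+Ts)*\<delta>" by (simp add: algebra_simps)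
  finally show ?thesis .
qed

lemma G_bound_aux:
  assumes "fs > 0" "ph > 0" "\<bar>ph - fs\<bar> \<le> D" "D \<le> fs/2"
  shows "gg (ph/fs) \<le> 2*D^2/fs^2"
proof -
  have y: "ph/fs > 0" using assms by simp
  have "gg (ph/fs) \<le> (ph/fs - 1)^2/(ph/fs)" by (rule gg_upper[OF y])
  also have "\<dots> = (ph - fs)^2/(fs*ph)" using assms(1,2) by (simp add: field_simps power2_eq_square)
  also have "\<dots> \<le> D^2/(fs*ph)"
  proof (rule divide_right_mono)
    have "\<bar>ph - fs\<bar>^2 \<le> D^2" using assms(3) by (intro power_mono) auto
    then show "(ph - fs)^2 \<le> D^2" by simp
  qed (use assms in auto)
  also have "\<dots> \<le> D^2/(fs*(fs/2))"
    using assms by (intro divide_left_mono mult_left_mono mult_pos_pos) auto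
  also have "\<dots> = 2*D^2/fs^2" by (simp add: power2_eq_square)
  finally show ?thesis .
qed

context dde_eq begin

lemma L0_bound:
  assumes d0: "0 < \<delta>" "\<delta> \<le> Dz b al Ts Is Vs"
    and close: "\<forall>\<theta>\<in>{-tau..0}. \<bar>T \<theta> - Ts\<bar> < \<delta> \<and> \<bar>I \<theta> - Is\<bar> < \<delta> \<and> \<bar>V \<theta> - Vs\<bar> < \<delta>"
  shows "L 0 \<le> Cz b al p tau Ts Is Vs * \<delta>^2"
proof -
  have tau0: "tau \<ge> 0" using params by simp
  have dz: "\<delta> \<le> Ts/2" "\<delta> \<le> Is/2" "\<delta> \<le> Vs/2" "\<delta> \<le> fs / (2*(b*(1/al+Ts)))"
    using d0 unfolding Dz_def fs_def by auto
  have c0: "\<bar>T 0 - Ts\<bar> < \<delta>" "\<bar>I 0 - Is\<bar> < \<delta>" "\<bar>V 0 - Vs\<bar> < \<delta>" using close tau0 by auto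
  have p0: "T 0 > 0" "I 0 > 0" "V 0 > 0" using positive[of 0] tau0 by auto
  have t1: "Ts * gg (T 0 / Ts) \<le> 2*\<delta>^2/Ts" by (rule comp_bound[OF p0(1) eqpos(1) c0(1) dz(1)])
  have t2: "Is * gg (I 0 / Is) \<le> 2*\<delta>^2/Is" by (rule comp_bound[OF p0(2) eqpos(2) c0(2) dz(2)])
  have t3: "(fs / (p * Is)) * (Vs * gg (V 0 / Vs)) \<le> (fs / (p * Is)) * (2*\<delta>^2/Vs)"
    using comp_bound[OF p0(3) eqpos(3) c0(3) dz(3)] fs_pos params eqpos by (intro mult_left_mono) auto
  define Dd where "Dd = b*(1/al+Ts)*\<delta>"
  have bpos: "b*(1/al+Ts) > 0" using params eqpos by (intro mult_pos_pos add_pos_pos) auto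
  have "\<delta>*(2*(b*(1/al+Ts))) \<le> fs" using dz(4) bpos by (simp add: pos_le_divide_eq)
  moreover have "Dd*2 = \<delta>*(2*(b*(1/al+Ts)))" unfolding Dd_def by (simp add: algebra_simps)
  ultimately have Dd: "Dd \<le> fs/2" by linarith
  have Gb: "G u \<le> 2*Dd^2/fs^2" if u: "u \<in> {-tau..0}" for u
  proof -
    have pu: "T u > 0" "V u > 0" using positive[of u] u by auto
    have cu': "\<bar>T u - Ts\<bar> < \<delta>" "\<bar>V u - Vs\<bar> < \<delta>" using close u by auto
    then have cu: "\<bar>T u - Ts\<bar> \<le> \<delta>" "\<bar>V u - Vs\<bar> \<le> \<delta>" by auto
    have "\<bar>incid b al (T u) (V u) - fs\<bar> \<le> Dd"
      unfolding fs_def Dd_def using params eqpos pu cu by (intro incid_close) auto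
    then show ?thesis unfolding G_def
      using G_bound_aux[OF fs_pos _ _ Dd] params pu by (simp add: incid_pos)
  qed
  have cG: "continuous_on {-tau..0} G" by (rule continuous_on_subset[OF G_cont]) auto
  have "H 0 - H (0 - tau) = integral {-tau..0} G" using int_term[of 0] by simp
  also have "\<dots> \<le> integral {-tau..0} (\<lambda>_. 2*Dd^2/fs^2)"
    by (rule integral_le[OF integrable_continuous_interval[OF cG]]) (use Gb in auto)
  also have "\<dots> = tau * (2*Dd^2/fs^2)" using tau0 by simp
  finally have t4: "fs * (H 0 - H (0 - tau)) \<le> fs * (tau * (2*Dd^2/fs^2))"
    using fs_pos by (intro mult_left_mono) auto
  have "fs * (tau * (2*Dd^2/fs^2)) = 2*tau*(b*(1/al+Ts))^2/fs * \<delta>^2"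
    unfolding Dd_def using fs_pos by (simp add: field_simps power2_eq_square)
  then have t4': "fs * (H 0 - H (0 - tau)) \<le> 2*tau*(b*(1/al+Ts))^2/fs * \<delta>^2" using t4 by simp
  have "Cz b al p tau Ts Is Vs * \<delta>^2 = 2*\<delta>^2/Ts + 2*\<delta>^2/Is + (fs / (p * Is)) * (2*\<delta>^2/Vs)
      + 2*tau*(b*(1/al+Ts))^2/fs * \<delta>^2"
    unfolding Cz_def fs_def[symmetric] by (simp add: algebra_simps)
  then show ?thesis unfolding L_def using t1 t2 t3 t4' by linarith
qed

lemma stab:
  assumes e: "e > 0" and L0: "L 0 < Ez b al p Ts Is Vs e"
  shows "\<forall>t\<ge>0. \<bar>T t - Ts\<bar> < e \<and> \<bar>I t - Is\<bar> < e \<and> \<bar>V t - Vs\<bar> < e"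
proof (intro allI impI)
  fix t :: real assume t: "t \<ge> 0"
  have p: "T t > 0" "I t > 0" "V t > 0" using positive[of t] t params by auto
  have Lt: "L t < Ez b al p Ts Is Vs e" using L_mono[of 0 t] t L0 by simp
  have "Ts * gg (T t / Ts) < Ts * (rz e Ts)^2" using L_lower(1)[OF t] Lt unfolding Ez_def by linarith
  then have 1: "\<bar>T t - Ts\<bar> < e" by (rule gg_close2[OF p(1) eqpos(1) eqpos(1) e])
  have "Is * gg (I t / Is) < Is * (rz e Is)^2" using L_lower(2)[OF t] Lt unfolding Ez_def by linarith
  then have 2: "\<bar>I t - Is\<bar> < e" by (rule gg_close2[OF p(2) eqpos(2) eqpos(2) e])
  have "kV * gg (V t / Vs) < kV * (rz e Vs)^2" using L_lower(3)[OF t] Lt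
    unfolding Ez_def kV_def fs_def[symmetric] by (simp add: mult.assoc)
  then have 3: "\<bar>V t - Vs\<bar> < e" by (rule gg_close2[OF p(3) eqpos(3) kV_pos e])
  show "\<bar>T t - Ts\<bar> < e \<and> \<bar>I t - Is\<bar> < e \<and> \<bar>V t - Vs\<bar> < e" using 1 2 3 by simp
qed

end


lemma quad_unique:
  fixes s d a Tm N N' :: real
  assumes "s > 0" "a > 0" "Tm > 0" "N > 0" "N' > 0"
    and q1: "s - d*N + a*N*(1 - N/Tm) = 0" and q2: "s - d*N' + a*N'*(1 - N'/Tm) = 0"
  shows "N = N'"
proof (rule ccontr)
  assume ne: "N \<noteq> N'"
  have "(N - N') * (a - d - a*(N + N')/Tm) = 0"
    using q1 q2 assms(3) by (simp add: field_simps)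
  then have h: "a - d = a*(N + N')/Tm" using ne by simp
  have "s = N * (d - a + a*N/Tm)" using q1 assms(3) by (simp add: field_simps)
  also have "d - a + a*N/Tm = - (a*N'/Tm)"
  proof -
    have h2: "a*(N + N')/Tm = a*N/Tm + a*N'/Tm" by (simp add: distrib_left add_divide_distrib)
    show ?thesis using h h2 by linarith
  qed
  finally have "s = - (N * (a*N'/Tm))" by simp
  moreover have "N * (a*N'/Tm) > 0" using assms by simp
  ultimately show False using assms(1) by linarith
qed

lemma equil_char:
  assumes pos: "s > 0" "d > 0" "a > 0" "Tm > 0" "b > 0" "al > 0" "mu > 0" "p > 0" "c > 0" and dmu: "d = mu"
    and E: "pos_equilibrium s d a Tm b al mu p c (T2, I2, V2)"
  shows "T2 > 0" "I2 > 0" "V2 > 0"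
    "s - d*(T2+I2) + a*(T2+I2)*(1 - (T2+I2)/Tm) = 0"
    "V2 = p*I2/c"
    "b*(T2+I2 - I2)*p = (d - a*(1-(T2+I2)/Tm))*(c + al*p*I2)"
    "d - a*(1-(T2+I2)/Tm) > 0"
proof -
  have P: "T2 > 0" "I2 > 0" "V2 > 0" and e1: "s - d * T2 + a * T2 * (1 - (T2 + I2) / Tm) - incid b al T2 V2 = 0"
    and e2: "incid b al T2 V2 + a * I2 * (1 - (T2 + I2) / Tm) - mu * I2 = 0"
    and e3: "p * I2 - c * V2 = 0" using E unfolding pos_equilibrium_def by auto
  show "T2 > 0" "I2 > 0" "V2 > 0" by (fact P)+
  show "s - d*(T2+I2) + a*(T2+I2)*(1 - (T2+I2)/Tm) = 0" using e1 e2 dmu by (simp add: algebra_simps)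
  show V2: "V2 = p*I2/c" using e3 pos by (simp add: field_simps)
  define k where "k = d - a*(1-(T2+I2)/Tm)"
  have fk: "incid b al T2 V2 = k * I2" using e2 dmu unfolding k_def by (simp add: algebra_simps)
  have fpos: "incid b al T2 V2 > 0" using P pos by (simp add: incid_pos)
  show "k > 0" using fk fpos P by (simp add: zero_less_mult_iff)
  have q: "c + al*p*I2 > 0" using pos P by (simp add: add_pos_pos)
  have "incid b al T2 V2 = (b*T2*p*I2)/(c + al*p*I2)"
    unfolding incid_def V2 using pos by (simp add: field_simps)
  then have "(b*T2*p*I2)/(c + al*p*I2) = k * I2" using fk by simp
  then have "b*T2*p*I2 = k*I2*(c + al*p*I2)" using q by (simp add: divide_eq_eq)
  then have "I2 * (b*T2*p) = I2 * (k*(c + al*p*I2))" by (simp add: algebra_simps)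
  then have "b*T2*p = k*(c + al*p*I2)" using P by simp
  then show "b*(T2+I2 - I2)*p = (d - a*(1-(T2+I2)/Tm))*(c + al*p*I2)" unfolding k_def by simp
qed

lemma equil_unique:
  assumes pos: "s > 0" "d > 0" "a > 0" "Tm > 0" "b > 0" "al > 0" "mu > 0" "p > 0" "c > 0" and dmu: "d = mu"
    and E1: "pos_equilibrium s d a Tm b al mu p c (T1, I1, V1)"
    and E2: "pos_equilibrium s d a Tm b al mu p c (T2, I2, V2)"
  shows "(T1, I1, V1) = (T2, I2, V2)"
proof -
  note c1 = equil_char[OF pos dmu E1] and c2 = equil_char[OF pos dmu E2]
  have N: "T1 + I1 = T2 + I2"
    by (rule quad_unique[of s a Tm _ _ d]) (use c1 c2 pos in auto)
  define N0 where "N0 = T1 + I1"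
  define k where "k = d - a*(1-N0/Tm)"
  have k: "k > 0" using c1(7) unfolding k_def N0_def .
  have r1: "b*(N0 - I1)*p = k*(c + al*p*I1)" using c1(6) unfolding k_def N0_def by simp
  have r2: "b*(N0 - I2)*p = k*(c + al*p*I2)" using c2(6) N unfolding k_def N0_def by simp
  have "(I1 - I2) * (b*p + k*al*p) = 0" using r1 r2 by (simp add: algebra_simps)
  moreover have "b*p + k*al*p > 0" using pos k by (simp add: add_pos_pos)
  ultimately have I: "I1 = I2" by simp
  then have "T1 = T2" using N by simp
  moreover have "V1 = V2" using c1(5) c2(5) I by simp
  ultimately show ?thesis using I by simp
qed

lemma T0_props:
  assumes pos: "s > 0" "a > 0" "Tm > 0"
  shows "T0 s d a Tm > 0" "s - d * T0 s d a Tm + a * T0 s d a Tm * (1 - T0 s d a Tm / Tm) = 0"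
proof -
  define S where "S = sqrt ((a - d)^2 + 4 * a * s / Tm)"
  define N where "N = T0 s d a Tm"
  have N: "N = Tm / (2 * a) * (a - d + S)" unfolding N_def T0_def S_def by simp
  have lt: "(a - d)^2 < (a - d)^2 + 4 * a * s / Tm" using pos by simp
  have "sqrt ((a - d)^2) < S" unfolding S_def by (rule real_sqrt_less_mono[OF lt])
  then have Sgt: "\<bar>a - d\<bar> < S" by simp
  then have "a - d + S > 0" by linarith
  then show "T0 s d a Tm > 0" unfolding N_def[symmetric] N using pos by simp
  have S2: "S^2 = (a - d)^2 + 4 * a * s / Tm"
    unfolding S_def by (rule real_sqrt_pow2) (use lt in \<open>auto intro: order_trans[OF zero_le_power2]\<close>)
  have "a * N^2 / Tm - (a - d) * N = Tm / (4 * a) * (S^2 - (a - d)^2)"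
    unfolding N using pos by (simp add: field_simps power2_eq_square)
  also have "\<dots> = s" unfolding S2 using pos by (simp add: field_simps)
  finally have "a * N^2 / Tm - (a - d) * N = s" .
  then show "s - d * T0 s d a Tm + a * T0 s d a Tm * (1 - T0 s d a Tm / Tm) = 0"
    unfolding N_def[symmetric] using pos by (simp add: field_simps power2_eq_square)
qed

lemma equil_exists:
  assumes pos: "s > 0" "d > 0" "a > 0" "Tm > 0" "b > 0" "al > 0" "mu > 0" "p > 0" "c > 0" and dmu: "d = mu"
    and R: "R0 s d a Tm b mu p c > 1"
  shows "\<exists>E. pos_equilibrium s d a Tm b al mu p c E"
proof -
  define N where "N = T0 s d a Tm"
  have Np: "N > 0" and q: "s - d * N + a * N * (1 - N / Tm) = 0"
    using T0_props[OF pos(1,3,4), of d] unfolding N_def by auto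
  define k where "k = d - a * (1 - N/Tm)"
  have ks: "k = s / N" using q Np unfolding k_def by (simp add: field_simps)
  have k: "k > 0" unfolding ks using pos Np by simp
  have "(1 / mu) * (b * p * N / c + a * (1 - N / Tm)) > 1" using R unfolding R0_def N_def by simp
  then have "b * p * N / c + a * (1 - N / Tm) > mu" using pos by (simp add: field_simps)
  then have "b * p * N / c > k" unfolding k_def using dmu by simp
  then have bk: "b * p * N > k * c" using pos by (simp add: field_simps)
  define D where "D = b * p + k * al * p"
  have D: "D > 0" unfolding D_def using pos k by (simp add: add_pos_pos)
  define I2 where "I2 = (b * p * N - k * c) / D"
  define T2 where "T2 = N - I2"
  define V2 where "V2 = p * I2 / c"
  have I2: "I2 > 0" unfolding I2_def using bk D by simp
  have T2e: "T2 = k * (al * p * N + c) / D" unfolding T2_def I2_def D_def using D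
    by (simp add: field_simps D_def)
  have T2p: "T2 > 0" unfolding T2e using k pos Np D by (simp add: add_pos_pos)
  have V2p: "V2 > 0" unfolding V2_def using pos I2 by simp
  have key: "b * T2 * p = k * (c + al * p * I2)"
    unfolding T2e I2_def using D by (simp add: field_simps D_def)
  have qq: "c + al * p * I2 > 0" using pos I2 by (simp add: add_pos_pos)
  have "incid b al T2 V2 = (b * T2 * p) * I2 / (c + al * p * I2)"
    unfolding incid_def V2_def using pos by (simp add: field_simps)
  also have "\<dots> = k * I2" unfolding key using qq by simp
  finally have f: "incid b al T2 V2 = k * I2" .
  have NT: "T2 + I2 = N" unfolding T2_def by simp
  have "pos_equilibrium s d a Tm b al mu p c (T2, I2, V2)"
    unfolding pos_equilibrium_def
  proof (simp only: prod.case, intro conjI)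
    show "T2 > 0" "I2 > 0" "V2 > 0" by (fact T2p I2 V2p)+
    show "s - d * T2 + a * T2 * (1 - (T2 + I2) / Tm) - incid b al T2 V2 = 0"
    proof -
      have "s - d * T2 + a * T2 * (1 - (T2 + I2) / Tm) - incid b al T2 V2 = s - d*T2 + a*T2*(1 - N/Tm) - k*I2"
        unfolding f NT by simp
      also have "\<dots> = s - k*T2 - k*I2" unfolding k_def by (simp add: algebra_simps)
      also have "\<dots> = s - k*(T2 + I2)" by (simp add: algebra_simps)
      also have "\<dots> = 0" unfolding NT ks using Np by simp
      finally show ?thesis .
    qed
    show "incid b al T2 V2 + a * I2 * (1 - (T2 + I2) / Tm) - mu * I2 = 0"
      unfolding f NT k_def using dmu by (simp add: algebra_simps)
    show "p * I2 - c * V2 = 0" unfolding V2_def using pos by simp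
  qed
  then show ?thesis by blast
qed

theorem corollary1:
  fixes s d a Tm b al mu p c tau :: real
  assumes "s > 0" "d > 0" "a > 0" "Tm > 0" "b > 0" "al > 0" "mu > 0" "p > 0" "c > 0"
    and "tau \<ge> 0"
    and "d = mu"
    and "R0 s d a Tm b mu p c > 1"
  shows "(\<exists>!E. pos_equilibrium s d a Tm b al mu p c E) \<and>
         (\<forall>E. pos_equilibrium s d a Tm b al mu p c E \<longrightarrow>
              globally_asymp_stable s d a Tm b al mu p c tau E)"
proof
  note pos = assms(1-9) and tau0 = assms(10) and dmu = assms(11)
  obtain E0 where E0: "pos_equilibrium s d a Tm b al mu p c E0" using equil_exists[OF pos dmu assms(12)] by blast
  show "\<exists>!E. pos_equilibrium s d a Tm b al mu p c E"
  proof (rule ex1I[of _ E0])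
    show "pos_equilibrium s d a Tm b al mu p c E0" by (fact E0)
  next
    fix E assume E: "pos_equilibrium s d a Tm b al mu p c E"
    obtain x1 y1 z1 where e1: "E = (x1, y1, z1)" by (cases E) auto
    obtain x0 y0 z0 where e0: "E0 = (x0, y0, z0)" by (cases E0) auto
    show "E = E0" using equil_unique[OF pos dmu, of x1 y1 z1 x0 y0 z0] E E0 unfolding e1 e0 by simp
  qed
  show "\<forall>E. pos_equilibrium s d a Tm b al mu p c E \<longrightarrow> globally_asymp_stable s d a Tm b al mu p c tau E"
  proof (intro allI impI)
    fix E assume PE: "pos_equilibrium s d a Tm b al mu p c E"
    obtain Ts Is Vs where E: "E = (Ts, Is, Vs)" by (cases E) auto
    have ep: "Ts > 0" "Is > 0" "Vs > 0"
      and eq1: "s - d*Ts + a*Ts*(1-(Ts+Is)/Tm) - incid b al Ts Vs = 0"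
      and eq2: "incid b al Ts Vs + a*Is*(1-(Ts+Is)/Tm) - mu*Is = 0"
      and eq3: "p*Is - c*Vs = 0"
      using PE unfolding E pos_equilibrium_def by auto
    have fsp: "incid b al Ts Vs > 0" using pos ep by (simp add: incid_pos)
    show "globally_asymp_stable s d a Tm b al mu p c tau E"
      unfolding E globally_asymp_stable_def prod.case
    proof (intro conjI allI impI)
      fix e :: real assume e: "e > 0"
      define D0 where "D0 = Dz b al Ts Is Vs"
      define C where "C = Cz b al p tau Ts Is Vs"
      define E1 where "E1 = Ez b al p Ts Is Vs e"
      have bpos: "b*(1/al+Ts) > 0" using pos ep by (intro mult_pos_pos add_pos_pos) auto
      have D0: "D0 > 0" unfolding D0_def Dz_def using ep fsp bpos by simp
      have r: "rz e Ts > 0" "rz e Is > 0" "rz e Vs > 0" using ep e by (simp_all add: rz_pos)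
      have E1: "E1 > 0" unfolding E1_def Ez_def using ep fsp pos e r
        by (auto intro!: mult_pos_pos divide_pos_pos)
      have C: "C \<ge> 0" unfolding C_def Cz_def using ep fsp pos tau0
        by (intro add_nonneg_nonneg mult_nonneg_nonneg divide_nonneg_pos) auto
      define \<delta> where "\<delta> = min D0 (sqrt (E1 / (C + 1)))"
      have dpos: "\<delta> > 0" unfolding \<delta>_def using D0 E1 C by simp
      have dle: "\<delta> \<le> D0" unfolding \<delta>_def by simp
      have "\<delta>^2 \<le> (sqrt (E1 / (C + 1)))^2" unfolding \<delta>_def using dpos \<delta>_def
        by (intro power_mono) auto
      also have "\<dots> = E1 / (C + 1)" using E1 C by simp
      finally have d2: "\<delta>^2 \<le> E1 / (C + 1)" .
      have "C * \<delta>^2 \<le> C * (E1 / (C + 1))" using d2 C by (intro mult_left_mono) auto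
      also have "\<dots> < E1" using C E1 by (simp add: field_simps)
      finally have CE: "C * \<delta>^2 < E1" .
      show "\<exists>\<delta>>0. \<forall>T I V. is_solution s d a Tm b al mu p c tau T I V \<and> pos_init tau T I V \<and>
          (\<forall>\<theta>\<in>{- tau..0}. \<bar>T \<theta> - Ts\<bar> < \<delta> \<and> \<bar>I \<theta> - Is\<bar> < \<delta> \<and> \<bar>V \<theta> - Vs\<bar> < \<delta>) \<longrightarrow>
          (\<forall>t\<ge>0. \<bar>T t - Ts\<bar> < e \<and> \<bar>I t - Is\<bar> < e \<and> \<bar>V t - Vs\<bar> < e)"
      proof (rule exI[of _ \<delta>], rule conjI[OF dpos], (rule allI)+, rule impI)
        fix T I V
        assume H: "is_solution s d a Tm b al mu p c tau T I V \<and> pos_init tau T I V \<and>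
          (\<forall>\<theta>\<in>{- tau..0}. \<bar>T \<theta> - Ts\<bar> < \<delta> \<and> \<bar>I \<theta> - Is\<bar> < \<delta> \<and> \<bar>V \<theta> - Vs\<bar> < \<delta>)"
        interpret X: dde_eq s d a Tm b al mu p c tau T I V Ts Is Vs
          by unfold_locales (use pos tau0 dmu H ep eq1 eq2 eq3 in auto)
        have "X.L 0 \<le> C * \<delta>^2" unfolding C_def
          by (rule X.L0_bound[OF dpos]) (use dle H in \<open>auto simp: D0_def\<close>)
        then have "X.L 0 < E1" using CE by linarith
        then show "\<forall>t\<ge>0. \<bar>T t - Ts\<bar> < e \<and> \<bar>I t - Is\<bar> < e \<and> \<bar>V t - Vs\<bar> < e"
          unfolding E1_def by (rule X.stab[OF e])
      qed
    next
      fix T I V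
      assume H: "is_solution s d a Tm b al mu p c tau T I V \<and> pos_init tau T I V"
      interpret X: dde_eq s d a Tm b al mu p c tau T I V Ts Is Vs
        by unfold_locales (use pos tau0 dmu H ep eq1 eq2 eq3 in auto)
      show "(T \<longlongrightarrow> Ts) at_top" using X.converge by simp
    next
      fix T I V
      assume H: "is_solution s d a Tm b al mu p c tau T I V \<and> pos_init tau T I V"
      interpret X: dde_eq s d a Tm b al mu p c tau T I V Ts Is Vs
        by unfold_locales (use pos tau0 dmu H ep eq1 eq2 eq3 in auto)
      show "(I \<longlongrightarrow> Is) at_top" using X.converge by simp
    next
      fix T I V
      assume H: "is_solution s d a Tm b al mu p c tau T I V \<and> pos_init tau T I V"
      interpret X: dde_eq s d a Tm b al mu p c tau T I V Ts Is Vs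
        by unfold_locales (use pos tau0 dmu H ep eq1 eq2 eq3 in auto)
      show "(V \<longlongrightarrow> Vs) at_top" using X.converge by simp
    qed
  qed
qed


end
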